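(* Let $\mathbb{H}\in\{\mathbb{R},\mathbb{C}\}$ and let $A\in\mathbb{H}^{m\times d}$ have the phase retrieval property. Then the set $\mathcal{K}_A=\{|Ax|:x\in\mathbb{H}^d\}\subset\mathbb{R}^m$ is not convex.
   Context: $|Ax|$ is the vector of entrywise moduli. $A$ has the phase retrieval property if for all $x,y\in\mathbb{H}^d$, $|Ax|=|Ay|$ implies $x=cy$ for some $c\in\mathbb{H}$ with $|c|=1$. *)

theory Defs
  imports "HOL-Analysis.Analysis"
begin

definition abs_meas :: "('a::real_normed_field)^'d^'m \<Rightarrow> 'a^'d \<Rightarrow> real^'m" where
  "abs_meas A x = (\<chi> i. norm ((A *v x) $ i))"

definition phase_retrieval :: "('a::real_normed_field)^'d^'m \<Rightarrow> bool" where
  "phase_retrieval A \<longleftrightarrow>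
     (\<forall>x y. abs_meas A x = abs_meas A y \<longrightarrow> (\<exists>c. norm c = 1 \<and> x = c *s y))"

end

theory Submission imports Defs begin

lemma mv_add[simp]: "(A *v (x + y)) $ i = (A *v x)$i + (A *v (y::'a::real_normed_field^'d))$i"
  by (simp add: matrix_vector_mult_def sum.distrib algebra_simps)
lemma mv_diff[simp]: "(A *v (x - y)) $ i = (A *v x)$i - (A *v (y::'a::real_normed_field^'d))$i"
  by (simp add: matrix_vector_mult_def sum_subtractf algebra_simps)
lemma mv_smult[simp]: "(A *v (c *s x)) $ i = c * (A *v (x::'a::real_normed_field^'d))$i"
  by (simp add: matrix_vector_mult_def sum_distrib_left algebra_simps)
lemma mv_zero[simp]: "(A *v (0::'a::real_normed_field^'d)) $ i = 0"
  by (simp add: matrix_vector_mult_def)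

lemma abs_meas_comp: "abs_meas A x $ i = norm ((A *v x) $ i)"
  by (simp add: abs_meas_def)

lemma mv_zero_inj: assumes "phase_retrieval A" "A *v x = 0" shows "x = 0"
proof -
  have "abs_meas A x = abs_meas A 0" using assms(2) by (simp add: abs_meas_def)
  then obtain c where "x = c *s 0" using assms(1) unfolding phase_retrieval_def by blast
  thus ?thesis by simp
qed

lemma mv_nonzero: assumes "phase_retrieval (A::'a::real_normed_field^'d^'m)" "x \<noteq> 0"
  obtains i where "(A *v x) $ i \<noteq> 0"
  using mv_zero_inj[OF assms(1)] assms(2) by (metis vec_eq_iff zero_index)

definition indep2 :: "'a::field^'d \<Rightarrow> 'a^'d \<Rightarrow> bool" where
  "indep2 u w \<longleftrightarrow> (\<forall>a b. a *s u + b *s w = 0 \<longrightarrow> a = 0 \<and> b = 0)"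

definition Z2 :: "'a::real_normed_field^'d^'m \<Rightarrow> 'a^'d \<Rightarrow> 'a^'d \<Rightarrow> 'm set" where
  "Z2 A u w = {i. (A *v u)$i = 0 \<and> (A *v w)$i = 0}"

definition spanprop :: "'a::real_normed_field^'d^'m \<Rightarrow> 'a^'d \<Rightarrow> 'a^'d \<Rightarrow> bool" where
  "spanprop A u w \<longleftrightarrow> (\<forall>z. (\<forall>i\<in>Z2 A u w. (A *v z)$i = 0) \<longrightarrow> (\<exists>a b. z = a *s u + b *s w))"

lemma indep2_nz: "indep2 u w \<Longrightarrow> u \<noteq> 0 \<and> w \<noteq> 0"
proof -
  assume h: "indep2 u w"
  have "u \<noteq> 0"
  proof
    assume "u = 0"
    then have "(1::'a) *s u + 0 *s w = 0" by simp
    then show False using h[unfolded indep2_def, rule_format, of 1 0] by simp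
  qed
  moreover have "w \<noteq> 0"
  proof
    assume "w = 0"
    then have "(0::'a) *s u + 1 *s w = 0" by simp
    then show False using h[unfolded indep2_def, rule_format, of 0 1] by simp
  qed
  ultimately show ?thesis by blast
qed

lemma improve:
  fixes A :: "'a::real_normed_field^'d^'m::finite"
  assumes pr: "phase_retrieval A" and ind: "indep2 u w" and nsp: "\<not> spanprop A u w"
  shows "\<exists>u' w'. indep2 u' w' \<and> card (Z2 A u w) < card (Z2 A u' w')"
proof -
  obtain z where z0: "\<forall>i\<in>Z2 A u w. (A *v z)$i = 0" and zn: "\<not>(\<exists>a b. z = a *s u + b *s w)"
    using nsp unfolding spanprop_def by blast
  have ind3: "a = 0 \<and> b = 0 \<and> c = 0" if h: "a *s u + b *s w + c *s z = 0" for a b c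
  proof (cases "c = 0")
    case True
    then show ?thesis using h ind unfolding indep2_def by auto
  next
    case False
    have "z = (- a / c) *s u + (- b / c) *s w"
      using h False by (simp add: vec_eq_iff field_simps) (metis add_eq_0_iff2 add.commute mult.commute)
    then show ?thesis using zn by blast
  qed
  obtain i where i: "(A *v u) $ i \<noteq> 0" using mv_nonzero[OF pr] indep2_nz[OF ind] by blast
  define a where "a = (A *v u) $ i"
  define b where "b = (A *v w) $ i"
  define c where "c = (A *v z) $ i"
  define u' where "u' = b *s u - a *s w"
  define w' where "w' = c *s u - a *s z"
  have "indep2 u' w'"
    unfolding indep2_def
  proof (intro allI impI)
    fix l m assume "l *s u' + m *s w' = 0"
    then have "(l*b + m*c) *s u + (- l*a) *s w + (- m*a) *s z = 0"
      unfolding u'_def w'_def by (simp add: vec_eq_iff algebra_simps)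
    then have "- l*a = 0" "- m*a = 0" using ind3 by blast+
    then show "l = 0 \<and> m = 0" using i a_def by simp
  qed
  moreover have "Z2 A u w \<subset> Z2 A u' w'"
  proof -
    have "Z2 A u w \<subseteq> Z2 A u' w'" using z0 unfolding Z2_def u'_def w'_def by auto
    moreover have "i \<in> Z2 A u' w'" "i \<notin> Z2 A u w"
      unfolding Z2_def u'_def w'_def a_def b_def c_def using i by (auto simp: algebra_simps)
    ultimately show ?thesis by blast
  qed
  then have "card (Z2 A u w) < card (Z2 A u' w')" by (simp add: psubset_card_mono)
  ultimately show ?thesis by blast
qed

lemma exists_pair:
  fixes A :: "'a::real_normed_field^'d^'m::finite"
  assumes card: "CARD('d::finite) \<ge> 2" and pr: "phase_retrieval A"
  shows "\<exists>u w::'a^'d. indep2 u w \<and> spanprop A u w"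
proof -
  have "\<not> CARD('d) \<le> Suc 0" using card by simp
  then obtain j k :: 'd where jk: "j \<noteq> k"
    using card_le_Suc0_iff_eq[OF finite[of UNIV]] by blast
  have "indep2 (axis j (1::'a)) (axis k 1)"
    unfolding indep2_def
  proof (intro allI impI)
    fix a b :: 'a assume h: "a *s axis j 1 + b *s axis k 1 = 0"
    have "(a *s axis j 1 + b *s axis k 1) $ j = 0" "(a *s axis j 1 + b *s axis k 1) $ k = 0"
      using h by auto
    then show "a = 0 \<and> b = 0" using jk by (simp add: axis_def)
  qed
  then obtain p where p: "indep2 (fst p) (snd p)"
    and pmax: "\<forall>q. indep2 (fst q) (snd q) \<longrightarrow> card (Z2 A (fst q) (snd q)) \<le> card (Z2 A (fst p) (snd p))"
    using ex_has_greatest_nat[of "\<lambda>q. indep2 (fst q) (snd q)" "(axis j 1, axis k 1)"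
        "\<lambda>q. card (Z2 A (fst q) (snd q))" "Suc CARD('m)"]
    by (auto simp: less_Suc_eq_le card_mono)
  show ?thesis
  proof (rule ccontr)
    assume "\<not> ?thesis"
    then have "\<not> spanprop A (fst p) (snd p)" using p by blast
    from improve[OF pr p this] obtain u' w' where "indep2 u' w'"
      "card (Z2 A (fst p) (snd p)) < card (Z2 A u' w')" by blast
    then show False using pmax[rule_format, of "(u', w')"] by simp
  qed
qed

lemma cx1:
  fixes r :: complex
  assumes "r \<noteq> 0"
  shows "cmod (r + \<i> * r / of_real (cmod r)) = cmod (r - \<i> * r / of_real (cmod r))"
proof -
  have "(cmod (r + \<i> * r / of_real (cmod r)))^2 = (cmod (r - \<i> * r / of_real (cmod r)))^2"
    unfolding cmod_power2 by (simp add: power2_eq_square algebra_simps)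
  then show ?thesis by (simp add: power2_eq_iff_nonneg)
qed

lemma cx2:
  fixes r d :: complex
  assumes r0: "r \<noteq> 0" and d1: "cmod d = 1"
    and eq: "cmod (r + d) = cmod (r + \<i> * r / of_real (cmod r))"
  shows "d = \<i> * r / of_real (cmod r) \<or> d = - (\<i> * r / of_real (cmod r))"
proof -
  define x where "x = Re r"
  define y where "y = Im r"
  define e where "e = Re d"
  define f where "f = Im d"
  define \<rho> where "\<rho> = cmod r"
  have rho2: "\<rho>^2 = x^2 + y^2" unfolding \<rho>_def x_def y_def by (simp add: cmod_power2)
  have rho0: "\<rho> > 0" using r0 unfolding \<rho>_def by simp
  have ef: "e^2 + f^2 = 1" using d1 unfolding e_def f_def by (metis cmod_power2 power_one)
  have "(cmod (r + d))^2 = (cmod (r + \<i> * r / of_real (cmod r)))^2" using eq by simp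
  then have "(x+e)^2 + (y+f)^2 = (x - y/\<rho>)^2 + (y + x/\<rho>)^2"
    unfolding cmod_power2 x_def y_def e_def f_def \<rho>_def by simp
  moreover have "(x+e)^2 + (y+f)^2 = x^2 + y^2 + (e^2 + f^2) + 2*(x*e + y*f)"
    by (simp add: power2_eq_square algebra_simps)
  moreover have "(x - y/\<rho>)^2 + (y + x/\<rho>)^2 = x^2 + y^2 + (x^2+y^2)/\<rho>^2"
    by (simp add: power2_eq_square diff_divide_distrib add_divide_distrib algebra_simps)
  moreover have "(x^2+y^2)/\<rho>^2 = 1" unfolding rho2[symmetric] using rho0 by simp
  ultimately have "x*e + y*f = 0" using ef by simp
  define k where "k = x*f - y*e"
  have h1: "x*e = - (y*f)" using \<open>x*e + y*f = 0\<close> by linarith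
  have h2: "y*f = - (x*e)" using \<open>x*e + y*f = 0\<close> by linarith
  have "\<rho>^2 * e = x*(x*e) + y*y*e" unfolding rho2 by (simp add: power2_eq_square algebra_simps)
  also have "\<dots> = - y * k" unfolding h1 k_def by (simp add: algebra_simps)
  finally have E: "\<rho>^2 * e = - y * k" .
  have "\<rho>^2 * f = x*x*f + y*(y*f)" unfolding rho2 by (simp add: power2_eq_square algebra_simps)
  also have "\<dots> = x * k" unfolding h2 k_def by (simp add: algebra_simps)
  finally have F: "\<rho>^2 * f = x * k" .
  have "(\<rho>^2)^2 = (\<rho>^2)^2 * (e^2 + f^2)" using ef by simp
  also have "\<dots> = (\<rho>^2 * e)^2 + (\<rho>^2 * f)^2" by (simp add: power_mult_distrib algebra_simps)
  also have "\<dots> = k^2 * (x^2 + y^2)" unfolding E F by (simp add: power_mult_distrib algebra_simps)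
  finally have "(\<rho>^2)^2 = k^2 * \<rho>^2" using rho2 by simp
  then have "k^2 = \<rho>^2" using rho0 by (simp add: power2_eq_square)
  then have "k = \<rho> \<or> k = - \<rho>" by (simp add: power2_eq_iff)
  moreover have "e = - y * k / \<rho>^2" "f = x * k / \<rho>^2"
    using E F rho0 by (simp_all add: field_simps)
  ultimately show ?thesis
    unfolding complex_eq_iff e_def f_def x_def y_def \<rho>_def
    by (auto simp: power2_eq_square)
qed

lemma config:
  fixes A :: "'a::real_normed_field^'d^'m::finite"
  assumes card: "CARD('d::finite) \<ge> 2" and pr: "phase_retrieval A"
  shows "\<exists>u w i1 i2 i3. indep2 u w \<and>
     (\<forall>z. (\<forall>i. (A *v u)$i = 0 \<and> (A *v w)$i = 0 \<longrightarrow> (A *v z)$i = 0) \<longrightarrow> (\<exists>a b. z = a *s u + b *s w)) \<and>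
     (A *v u)$i1 = 0 \<and> (A *v w)$i1 \<noteq> 0 \<and> (A *v u)$i2 \<noteq> 0 \<and> (A *v w)$i2 = 0 \<and>
     (A *v u)$i3 \<noteq> 0 \<and> (A *v w)$i3 \<noteq> 0"
proof -
  obtain u w where ind: "indep2 u w" and sp: "spanprop A u w" using exists_pair[OF card pr] by blast
  obtain i1 where qnz: "(A *v u)$i1 \<noteq> 0" using mv_nonzero[OF pr] indep2_nz[OF ind] by blast
  define p where "p = (A *v w)$i1"
  define q where "q = (A *v u)$i1"
  define u1 where "u1 = p *s u - q *s w"
  have u1nz: "u1 \<noteq> 0"
  proof
    assume "u1 = 0" then have "p *s u + (-q) *s w = 0" by (simp add: u1_def vec_eq_iff)
    then show False using ind[unfolded indep2_def, rule_format, of p "-q"] qnz q_def by simp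
  qed
  obtain i2 where i2: "(A *v u1)$i2 \<noteq> 0" using mv_nonzero[OF pr u1nz] by blast
  define r where "r = (A *v w)$i2"
  define kv where "kv = (A *v u)$i2"
  define w1 where "w1 = r *s u - kv *s w"
  have D: "(A *v u1)$i2 = p * kv - q*r" by (simp add: u1_def r_def kv_def)
  have u1i1: "(A *v u1)$i1 = 0" by (simp add: u1_def p_def q_def mult.commute)
  have w1i2: "(A *v w1)$i2 = 0" by (simp add: w1_def r_def kv_def mult.commute)
  have w1i1: "(A *v w1)$i1 = - (A *v u1)$i2" by (simp add: w1_def u1_def p_def q_def r_def kv_def algebra_simps)
  have Dnz: "p * kv - q*r \<noteq> 0" using i2 D by simp
  have w1i1nz: "(A *v w1)$i1 \<noteq> 0" using w1i1 i2 by simp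
  have w1nz: "w1 \<noteq> 0" using w1i1nz by auto
  have span1: "a *s u + b *s w = ((a * kv + b*r)/(p * kv - q*r)) *s u1 + (-(a*q + b*p)/(p * kv - q*r)) *s w1" for a b
  proof -
    define l where "l = (a * kv + b*r)/(p * kv - q*r)"
    define m where "m = (-(a*q + b*p)/(p * kv - q*r))"
    have c1: "l * p + m * r = a" unfolding l_def m_def using Dnz
      by (simp add: divide_simps) (simp add: algebra_simps)
    have c2: "- l * q - m * kv = b" unfolding l_def m_def using Dnz
      by (simp add: divide_simps) (simp add: algebra_simps)
    have "l *s u1 + m *s w1 = (l * p + m * r) *s u + (- l * q - m * kv) *s w"
      unfolding u1_def w1_def by (simp add: vec_eq_iff algebra_simps)
    then have "a *s u + b *s w = l *s u1 + m *s w1" by (simp only: c1 c2)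
    then show ?thesis unfolding l_def m_def .
  qed
  have ind1: "indep2 u1 w1"
    unfolding indep2_def
  proof (intro allI impI)
    fix l m assume h: "l *s u1 + m *s w1 = 0"
    then have "(A *v (l *s u1 + m *s w1))$i2 = 0" by simp
    then have "l = 0" using w1i2 i2 by simp
    then show "l = 0 \<and> m = 0" using h w1nz by simp
  qed
  have F: "\<exists>a b. z = a *s u1 + b *s w1"
    if hz: "\<forall>i. (A *v u1)$i = 0 \<and> (A *v w1)$i = 0 \<longrightarrow> (A *v z)$i = 0" for z
  proof -
    have "\<forall>i\<in>Z2 A u w. (A *v z)$i = 0"
      using hz unfolding Z2_def u1_def w1_def by auto
    then obtain a b where "z = a *s u + b *s w" using sp unfolding spanprop_def by blast
    then show ?thesis using span1[of a b] by blast
  qed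
  have "\<exists>i3. (A *v u1)$i3 \<noteq> 0 \<and> (A *v w1)$i3 \<noteq> 0"
  proof (rule ccontr)
    assume "\<not> ?thesis"
    then have "abs_meas A (u1 + w1) = abs_meas A (u1 - w1)"
      unfolding vec_eq_iff abs_meas_def
    proof (intro allI)
      fix i assume "\<not> (\<exists>i3. (A *v u1)$i3 \<noteq> 0 \<and> (A *v w1)$i3 \<noteq> 0)"
      then have "(A *v u1)$i = 0 \<or> (A *v w1)$i = 0" by blast
      then show "(\<chi> i. norm ((A *v (u1 + w1)) $ i)) $ i = (\<chi> i. norm ((A *v (u1 - w1)) $ i)) $ i"
        by (auto simp: norm_minus_commute)
    qed
    then obtain c where c: "u1 + w1 = c *s (u1 - w1)" using pr unfolding phase_retrieval_def by blast
    then have "(1 - c) *s u1 + (1 + c) *s w1 = 0" by (simp add: vec_eq_iff algebra_simps)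
    then have "1 - c = 0 \<and> 1 + c = 0" by (rule ind1[unfolded indep2_def, rule_format])
    then have a1: "1 - c = 0" and a2: "1 + c = 0" by auto
    from a1 have "c = 1" by simp
    with a2 have "(1::'a) + 1 = 0" by simp
    then show False by simp
  qed
  then obtain i3 where "(A *v u1)$i3 \<noteq> 0 \<and> (A *v w1)$i3 \<noteq> 0" by blast
  then have i3a: "(A *v u1)$i3 \<noteq> 0" and i3b: "(A *v w1)$i3 \<noteq> 0" by auto
  have F': "\<forall>z. (\<forall>i. (A *v u1)$i = 0 \<and> (A *v w1)$i = 0 \<longrightarrow> (A *v z)$i = 0) \<longrightarrow> (\<exists>a b. z = a *s u1 + b *s w1)"
    using F by blast
  show ?thesis
    apply (rule exI[of _ u1], rule exI[of _ w1], rule exI[of _ i1], rule exI[of _ i2], rule exI[of _ i3])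
    apply (intro conjI)
    by (fact ind1 F' u1i1 w1i1nz i2 w1i2 i3a i3b)+
qed


lemma real_max_contra:
  fixes s t a b :: real
  assumes "s \<noteq> 0" "t \<noteq> 0" "\<bar>a\<bar> = 1" "\<bar>b\<bar> = 1" "\<bar>a * s + b * t\<bar> = max \<bar>s\<bar> \<bar>t\<bar>"
  shows False
proof -
  have "a = 1 \<or> a = -1" "b = 1 \<or> b = -1" using assms(3,4) by linarith+
  then show False using assms(1,2,5) by (elim disjE) (simp_all add: max_def split: if_splits; arith)+
qed
lemma half_max: fixes s t :: real shows "(\<bar>s+t\<bar> + \<bar>s-t\<bar>)/2 = max \<bar>s\<bar> \<bar>t\<bar>"
  by (simp add: max_def) arith

lemma real_case:
  fixes A :: "real^'d^'m::finite"
  assumes card: "CARD('d::finite) \<ge> 2" and pr: "phase_retrieval A"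
  shows "\<not> convex (range (abs_meas A))"
proof
  assume cv: "convex (range (abs_meas A))"
  obtain u w i1 i2 i3 where
        sp: "\<forall>z. (\<forall>i. (A *v u)$i = 0 \<and> (A *v w)$i = 0 \<longrightarrow> (A *v z)$i = 0) \<longrightarrow> (\<exists>a b. z = a *s u + b *s w)"
    and h1: "(A *v u)$i1 = 0" "(A *v w)$i1 \<noteq> 0" and h2: "(A *v u)$i2 \<noteq> 0" "(A *v w)$i2 = 0"
    and h3: "(A *v u)$i3 \<noteq> 0" "(A *v w)$i3 \<noteq> 0"
    using config[OF card pr] by (elim exE conjE) blast
  have "(1/2) *\<^sub>R abs_meas A (u + w) + (1/2) *\<^sub>R abs_meas A (u - w) \<in> range (abs_meas A)"
    by (rule convexD[OF cv]) auto
  then obtain z where hz: "abs_meas A z = (1/2) *\<^sub>R abs_meas A (u + w) + (1/2) *\<^sub>R abs_meas A (u - w)"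
    by auto
  have comp: "\<bar>(A *v z)$i\<bar> = max \<bar>(A *v u)$i\<bar> \<bar>(A *v w)$i\<bar>" for i
  proof -
    have "abs_meas A z $ i = ((1/2) *\<^sub>R abs_meas A (u + w) + (1/2) *\<^sub>R abs_meas A (u - w)) $ i"
      using hz by simp
    then have "\<bar>(A *v z)$i\<bar> = (\<bar>(A *v u)$i + (A *v w)$i\<bar> + \<bar>(A *v u)$i - (A *v w)$i\<bar>)/2"
      by (simp add: abs_meas_def)
    then show ?thesis using half_max by simp
  qed
  have "\<forall>i. (A *v u)$i = 0 \<and> (A *v w)$i = 0 \<longrightarrow> (A *v z)$i = 0"
  proof (intro allI impI)
    fix i assume "(A *v u)$i = 0 \<and> (A *v w)$i = 0"
    then show "(A *v z)$i = 0" using comp[of i] by simp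
  qed
  then obtain a b where z: "z = a *s u + b *s w" using sp by blast
  have Lz: "(A *v z)$i = a * (A *v u)$i + b * (A *v w)$i" for i unfolding z by simp
  have "\<bar>b\<bar> * \<bar>(A *v w)$i1\<bar> = \<bar>(A *v w)$i1\<bar>" using comp[of i1] h1 Lz[of i1] by (simp add: abs_mult)
  then have b1: "\<bar>b\<bar> = 1" using h1 by simp
  have "\<bar>a\<bar> * \<bar>(A *v u)$i2\<bar> = \<bar>(A *v u)$i2\<bar>" using comp[of i2] h2 Lz[of i2] by (simp add: abs_mult)
  then have a1: "\<bar>a\<bar> = 1" using h2 by simp
  have e3: "\<bar>a * (A *v u)$i3 + b * (A *v w)$i3\<bar> = max \<bar>(A *v u)$i3\<bar> \<bar>(A *v w)$i3\<bar>"
    using comp[of i3] Lz[of i3] by simp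
  show False using real_max_contra[OF h3 a1 b1 e3] .
qed

lemma complex_case:
  fixes A :: "complex^'d^'m::finite"
  assumes card: "CARD('d::finite) \<ge> 2" and pr: "phase_retrieval A"
  shows "\<not> convex (range (abs_meas A))"
proof
  assume cv: "convex (range (abs_meas A))"
  obtain u w i1 i2 i3 where ind: "indep2 u w" and
        sp: "\<forall>z. (\<forall>i. (A *v u)$i = 0 \<and> (A *v w)$i = 0 \<longrightarrow> (A *v z)$i = 0) \<longrightarrow> (\<exists>a b. z = a *s u + b *s w)"
    and h1: "(A *v u)$i1 = 0" "(A *v w)$i1 \<noteq> 0" and h2: "(A *v u)$i2 \<noteq> 0" "(A *v w)$i2 = 0"
    and h3: "(A *v u)$i3 \<noteq> 0" "(A *v w)$i3 \<noteq> 0"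
    using config[OF card pr] by (elim exE conjE) blast
  define s where "s = (A *v u)$i3"
  define t where "t = (A *v w)$i3"
  define r where "r = s / t"
  define g where "g = \<i> * r / of_real (cmod r)"
  have s0: "s \<noteq> 0" and t0: "t \<noteq> 0" using h3 s_def t_def by auto
  have r0: "r \<noteq> 0" using s0 t0 r_def by simp
  have srt: "s = r * t" using t0 r_def by simp
  have g1: "cmod g = 1" using r0 unfolding g_def by (simp add: norm_mult norm_divide)
  define p where "p = abs_meas A (u + g *s w)"
  define q where "q = abs_meas A (u - g *s w)"
  have "(1/2) *\<^sub>R p + (1/2) *\<^sub>R q \<in> range (abs_meas A)"
    by (rule convexD[OF cv]) (auto simp: p_def q_def)
  then obtain z where hz: "abs_meas A z = (1/2) *\<^sub>R p + (1/2) *\<^sub>R q"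
    by auto
  have comp: "cmod ((A *v z)$i) = (cmod ((A *v u)$i + g * (A *v w)$i) + cmod ((A *v u)$i - g * (A *v w)$i))/2" for i
  proof -
    have "abs_meas A z $ i = ((1/2) *\<^sub>R p + (1/2) *\<^sub>R q) $ i"
      using hz by simp
    then show ?thesis by (simp add: abs_meas_def p_def q_def)
  qed
  have "\<forall>i. (A *v u)$i = 0 \<and> (A *v w)$i = 0 \<longrightarrow> (A *v z)$i = 0"
  proof (intro allI impI)
    fix i assume "(A *v u)$i = 0 \<and> (A *v w)$i = 0"
    then show "(A *v z)$i = 0" using comp[of i] by simp
  qed
  then obtain a b where z: "z = a *s u + b *s w" using sp by blast
  have Lz: "(A *v z)$i = a * (A *v u)$i + b * (A *v w)$i" for i unfolding z by simp
  have "cmod b * cmod ((A *v w)$i1) = cmod ((A *v w)$i1)"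
    using comp[of i1] h1 Lz[of i1] g1 by (simp add: norm_mult norm_minus_cancel)
  then have b1: "cmod b = 1" using h1 by simp
  have "cmod a * cmod ((A *v u)$i2) = cmod ((A *v u)$i2)"
    using comp[of i2] h2 Lz[of i2] by (simp add: norm_mult)
  then have a1: "cmod a = 1" using h2 by simp
  have a0: "a \<noteq> 0" using a1 by auto
  have pq3: "cmod (s + g * t) = cmod (s - g * t)"
  proof -
    have "cmod (s + g * t) = cmod t * cmod (r + g)" unfolding srt by (simp add: norm_mult[symmetric] algebra_simps)
    also have "\<dots> = cmod t * cmod (r - g)" using cx1[OF r0] unfolding g_def by simp
    also have "\<dots> = cmod (s - g * t)" unfolding srt by (simp add: norm_mult[symmetric] algebra_simps)
    finally show ?thesis .
  qed
  have e3: "cmod (a * s + b * t) = cmod (s + g * t)"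
    using comp[of i3] Lz[of i3] pq3 unfolding s_def t_def by simp
  define d where "d = b / a"
  have d1: "cmod d = 1" using a1 b1 by (simp add: d_def norm_divide)
  have bad: "b = a * d" using a0 d_def by simp
  have "cmod t * cmod (r + d) = cmod t * cmod (r + g)"
  proof -
    have "cmod t * cmod (r + d) = cmod (a * s + b * t)"
    proof -
      have "a * s + b * t = a * (t * (r + d))" unfolding bad srt by (simp add: algebra_simps)
      then show ?thesis using a1 by (simp add: norm_mult)
    qed
    also have "\<dots> = cmod (s + g * t)" by (rule e3)
    also have "\<dots> = cmod t * cmod (r + g)" unfolding srt by (simp add: norm_mult[symmetric] algebra_simps)
    finally show ?thesis .
  qed
  then have "cmod (r + d) = cmod (r + g)" using t0 by simp
  then have dg: "d = g \<or> d = - g" using cx2[OF r0 d1] unfolding g_def by simp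
  have zd: "abs_meas A z = abs_meas A (u + d *s w)"
    unfolding vec_eq_iff abs_meas_def
  proof
    fix i
    have "(A *v z)$i = a * ((A *v u)$i + d * (A *v w)$i)" unfolding Lz bad by (simp add: algebra_simps)
    then show "(\<chi> i. norm ((A *v z) $ i)) $ i = (\<chi> i. norm ((A *v (u + d *s w)) $ i)) $ i"
      using a1 by (simp add: norm_mult)
  qed
  have "p = q"
  proof (cases "d = g")
    case True
    then have "p = (1/2) *\<^sub>R p + (1/2) *\<^sub>R q" using zd hz p_def by simp
    then have hh: "\<forall>i. p $ i = p $ i / 2 + q $ i / 2" by (simp add: vec_eq_iff)
    show ?thesis unfolding vec_eq_iff
    proof
      fix i show "p $ i = q $ i" using hh[rule_format, of i] by linarith
    qed
  next
    case False
    then have "d = - g" using dg by simp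
    then have "u + d *s w = u - g *s w" by (simp add: vec_eq_iff)
    then have "q = (1/2) *\<^sub>R p + (1/2) *\<^sub>R q" using zd hz q_def by simp
    then have hh: "\<forall>i. q $ i = p $ i / 2 + q $ i / 2" by (simp add: vec_eq_iff)
    show ?thesis unfolding vec_eq_iff
    proof
      fix i show "p $ i = q $ i" using hh[rule_format, of i] by linarith
    qed
  qed
  then obtain c where c: "u + g *s w = c *s (u - g *s w)"
    using pr unfolding phase_retrieval_def p_def q_def by blast
  then have "(1 - c) *s u + (g + c * g) *s w = 0" by (simp add: vec_eq_iff algebra_simps)
  then have "1 - c = 0 \<and> g + c * g = 0" by (rule ind[unfolded indep2_def, rule_format])
  then have "c = 1" "g + c * g = 0" by auto
  then have "g = 0" by simp
  then show False using g1 by simp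
qed

theorem lemma3p2:
  assumes "CARD('d::finite) \<ge> 2"
  shows "(\<forall>A :: real^'d^'m::finite. phase_retrieval A \<longrightarrow> \<not> convex (range (abs_meas A)))
       \<and> (\<forall>A :: complex^'d^'m::finite. phase_retrieval A \<longrightarrow> \<not> convex (range (abs_meas A)))"
  using real_case[OF assms] complex_case[OF assms] by blast

end
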